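(* Let $F$, $G$, and $H$ be simple graphs. Then \[\hom(F,G\cdot H)=\sum_{\mathcal{R}}\hom(F/\mathcal{R},G)\,\hom\Big(\coprod_{R\in\mathcal{R}}F[R],H\Big),\] where the sum ranges over all partitions $\mathcal{R}$ of $V(F)$ such that $F[R]$ is connected for all $R\in\mathcal{R}$.
   Context: All graphs are finite, undirected, without multiple edges; simple means without loops. $\hom(F,G)$ counts homomorphisms $F\to G$. $G\cdot H$ is the lexicographic product: vertex set $V(G)\times V(H)$, with $(g,h)$ adjacent to $(g',h')$ iff $g=g'$ and $hh'\in E(H)$, or $gg'\in E(G)$. $F[R]$ is the subgraph induced by $R$; $\coprod$ is disjoint union. For a partition $\mathcal{R}$ of $V(F)$, $F/\mathcal{R}$ is the simple graph with vertex set $\mathcal{R}$ and an edge $PQ$ ($P\ne Q$) iff some $p\in P$ and $q\in Q$ are adjacent in $F$. *)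

theory Defs
  imports Main "HOL-Library.FuncSet" "HOL-Library.Disjoint_Sets"
begin

record 'a sgraph =
  verts :: "'a set"
  adj :: "'a \<Rightarrow> 'a \<Rightarrow> bool"

definition simple_graph :: "('a, 'z) sgraph_scheme \<Rightarrow> bool" where
  "simple_graph G \<longleftrightarrow> finite (verts G)
     \<and> (\<forall>x y. adj G x y \<longrightarrow> x \<in> verts G \<and> y \<in> verts G)
     \<and> (\<forall>x y. adj G x y \<longrightarrow> adj G y x)
     \<and> (\<forall>x. \<not> adj G x x)"

definition homs :: "'a sgraph \<Rightarrow> 'b sgraph \<Rightarrow> ('a \<Rightarrow> 'b) set" where
  "homs F G = {f \<in> verts F \<rightarrow>\<^sub>E verts G. \<forall>x y. adj F x y \<longrightarrow> adj G (f x) (f y)}"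

definition hom :: "'a sgraph \<Rightarrow> 'b sgraph \<Rightarrow> nat" where
  "hom F G = card (homs F G)"

definition lex_prod :: "'b sgraph \<Rightarrow> 'c sgraph \<Rightarrow> ('b \<times> 'c) sgraph" where
  "lex_prod G H = \<lparr> verts = verts G \<times> verts H,
     adj = (\<lambda>(g,h) (g',h'). (g,h) \<in> verts G \<times> verts H \<and> (g',h') \<in> verts G \<times> verts H \<and>
              ((g = g' \<and> adj H h h') \<or> adj G g g')) \<rparr>"

definition induced :: "'a sgraph \<Rightarrow> 'a set \<Rightarrow> 'a sgraph" where
  "induced F R = \<lparr> verts = verts F \<inter> R, adj = (\<lambda>x y. adj F x y \<and> x \<in> R \<and> y \<in> R) \<rparr>"

definition coprod :: "'i set \<Rightarrow> ('i \<Rightarrow> 'a sgraph) \<Rightarrow> ('i \<times> 'a) sgraph" where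
  "coprod I Gs = \<lparr> verts = {(i, v). i \<in> I \<and> v \<in> verts (Gs i)},
     adj = (\<lambda>(i,v) (j,w). i \<in> I \<and> i = j \<and> adj (Gs i) v w) \<rparr>"

definition quotient_graph :: "'a sgraph \<Rightarrow> 'a set set \<Rightarrow> 'a set sgraph" where
  "quotient_graph F \<R> = \<lparr> verts = \<R>,
     adj = (\<lambda>P Q. P \<in> \<R> \<and> Q \<in> \<R> \<and> P \<noteq> Q \<and> (\<exists>p\<in>P. \<exists>q\<in>Q. adj F p q)) \<rparr>"

definition connected_graph :: "'a sgraph \<Rightarrow> bool" where
  "connected_graph G \<longleftrightarrow> verts G \<noteq> {} \<and>
     (\<forall>x\<in>verts G. \<forall>y\<in>verts G. (adj G)\<^sup>*\<^sup>* x y)"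

end

theory Submission
  imports Defs
begin

lemma rtranclp_sym_aux:
  assumes "\<And>x y. r x y \<Longrightarrow> r y x" and "r\<^sup>*\<^sup>* x y"
  shows "r\<^sup>*\<^sup>* y x"
  using assms(2)
proof (induction rule: rtranclp_induct)
  case base then show ?case by simp
next
  case (step y z)
  then show ?case using assms(1) by (meson converse_rtranclp_into_rtranclp)
qed

definition part :: "'a set set \<Rightarrow> 'a \<Rightarrow> 'a set" where
  "part \<R> v = (THE P. P \<in> \<R> \<and> v \<in> P)"

lemma part_unique:
  assumes "partition_on A \<R>" "P \<in> \<R>" "v \<in> P"
  shows "part \<R> v = P"
proof -
  have "\<And>Q. Q \<in> \<R> \<and> v \<in> Q \<Longrightarrow> Q = P"
    using assms partition_onD2[OF assms(1)] by (meson disjnt_iff pairwiseD disjoint_def)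
  then show ?thesis unfolding part_def using assms by (metis (mono_tags, lifting) theI)
qed

lemma part_in:
  assumes "partition_on A \<R>" "v \<in> A"
  shows "part \<R> v \<in> \<R> \<and> v \<in> part \<R> v"
proof -
  obtain P where "P \<in> \<R>" "v \<in> P" using assms partition_onD1 by blast
  then show ?thesis using part_unique[OF assms(1)] by metis
qed


context
  fixes F :: "'a sgraph" and G :: "'b sgraph" and H :: "'c sgraph"
  assumes sF: "simple_graph F" and sG: "simple_graph G" and sH: "simple_graph H"
begin

definition EE :: "('a \<Rightarrow> 'b \<times> 'c) \<Rightarrow> 'a \<Rightarrow> 'a \<Rightarrow> bool" where
  "EE f x y \<longleftrightarrow> adj F x y \<and> fst (f x) = fst (f y)"

definition compo :: "('a \<Rightarrow> 'b \<times> 'c) \<Rightarrow> 'a \<Rightarrow> 'a set" where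
  "compo f v = {w. (EE f)\<^sup>*\<^sup>* v w}"

definition partsOf :: "('a \<Rightarrow> 'b \<times> 'c) \<Rightarrow> 'a set set" where
  "partsOf f = compo f ` verts F"

definition phiOf :: "('a \<Rightarrow> 'b \<times> 'c) \<Rightarrow> 'a set \<Rightarrow> 'b" where
  "phiOf f P = (if P \<in> partsOf f then fst (f (SOME v. v \<in> P)) else undefined)"

definition psiOf :: "('a \<Rightarrow> 'b \<times> 'c) \<Rightarrow> 'a set \<times> 'a \<Rightarrow> 'c" where
  "psiOf f = (\<lambda>(P, v). if P \<in> partsOf f \<and> v \<in> P \<and> v \<in> verts F then snd (f v) else undefined)"

definition Psi where "Psi f = (partsOf f, phiOf f, psiOf f)"

definition Phi :: "'a set set \<times> ('a set \<Rightarrow> 'b) \<times> ('a set \<times> 'a \<Rightarrow> 'c) \<Rightarrow> 'a \<Rightarrow> 'b \<times> 'c" where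
  "Phi x = (\<lambda>v. if v \<in> verts F then (fst (snd x) (part (fst x) v), snd (snd x) (part (fst x) v, v))
       else undefined)"

definition Parts where
  "Parts = {\<R>. partition_on (verts F) \<R> \<and> (\<forall>R\<in>\<R>. connected_graph (induced F R))}"

definition DD where
  "DD = (SIGMA \<R>:Parts. homs (quotient_graph F \<R>) G \<times> homs (coprod \<R> (\<lambda>R. induced F R)) H)"

lemma adjF: "adj F x y \<Longrightarrow> x \<in> verts F \<and> y \<in> verts F \<and> adj F y x \<and> x \<noteq> y"
  using sF unfolding simple_graph_def by metis

lemma adjG: "adj G x y \<Longrightarrow> x \<noteq> y"
  using sG unfolding simple_graph_def by metis

lemma adjH: "adj H x y \<Longrightarrow> x \<noteq> y"
  using sH unfolding simple_graph_def by metis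

lemma EE_sym: "EE f x y \<Longrightarrow> EE f y x"
  unfolding EE_def using adjF by metis

lemma EE_fst: "(EE f)\<^sup>*\<^sup>* x y \<Longrightarrow> fst (f x) = fst (f y)"
  by (induction rule: rtranclp_induct) (auto simp: EE_def)

lemma EE_verts: "(EE f)\<^sup>*\<^sup>* x y \<Longrightarrow> x \<in> verts F \<Longrightarrow> y \<in> verts F"
  by (induction rule: rtranclp_induct) (auto simp: EE_def dest: adjF)

lemma compo_eq: "w \<in> compo f v \<Longrightarrow> compo f w = compo f v"
proof -
  assume "w \<in> compo f v"
  then have 1: "(EE f)\<^sup>*\<^sup>* v w" by (simp add: compo_def)
  then have 2: "(EE f)\<^sup>*\<^sup>* w v" using rtranclp_sym_aux EE_sym by metis
  show ?thesis unfolding compo_def using 1 2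
    by (auto intro: rtranclp_trans)
qed

lemma compo_self: "v \<in> compo f v"
  by (simp add: compo_def)

lemma partsOf_partition: "partition_on (verts F) (partsOf f)"
proof (rule partition_onI)
  show "\<Union> (partsOf f) = verts F"
    unfolding partsOf_def compo_def using EE_verts by auto
  show "{} \<notin> partsOf f" unfolding partsOf_def using compo_self by blast
  fix P Q assume "P \<in> partsOf f" "Q \<in> partsOf f" "P \<noteq> Q"
  then show "disjnt P Q" unfolding partsOf_def disjnt_def
    using compo_eq by blast
qed

lemma part_partsOf: "v \<in> verts F \<Longrightarrow> part (partsOf f) v = compo f v"
  using part_unique[OF partsOf_partition] compo_self unfolding partsOf_def by blast

lemma partsOf_connected:
  assumes "P \<in> partsOf f"
  shows "connected_graph (induced F P)"
proof -
  obtain v where v: "v \<in> verts F" "P = compo f v" using assms unfolding partsOf_def by blast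
  have sub: "P \<subseteq> verts F" using v EE_verts unfolding compo_def by blast
  have reach: "(adj (induced F P))\<^sup>*\<^sup>* v x" if "x \<in> P" for x
  proof -
    have "(EE f)\<^sup>*\<^sup>* v x" using that v by (simp add: compo_def)
    then show ?thesis
    proof (induction rule: rtranclp_induct)
      case base then show ?case by simp
    next
      case (step y z)
      have "y \<in> P" "z \<in> P" using step v unfolding compo_def
        by (auto intro: rtranclp.rtrancl_into_rtrancl)
      then have "adj (induced F P) y z" using step(2) by (simp add: induced_def EE_def)
      then show ?case using step(3) by (simp add: rtranclp.rtrancl_into_rtrancl)
    qed
  qed
  have symi: "adj (induced F P) x y \<Longrightarrow> adj (induced F P) y x" for x y
    by (auto simp: induced_def dest: adjF)
  show ?thesis unfolding connected_graph_def
  proof (intro conjI ballI)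
    show "verts (induced F P) \<noteq> {}" using v compo_self by (auto simp: induced_def)
    fix x y assume "x \<in> verts (induced F P)" "y \<in> verts (induced F P)"
    then have "x \<in> P" "y \<in> P" by (auto simp: induced_def)
    then have "(adj (induced F P))\<^sup>*\<^sup>* x v" "(adj (induced F P))\<^sup>*\<^sup>* v y"
      using reach rtranclp_sym_aux[of "adj (induced F P)", OF symi] by blast+
    then show "(adj (induced F P))\<^sup>*\<^sup>* x y" by (meson rtranclp_trans)
  qed
qed


lemma adj_lex: "adj (lex_prod G H) p q \<longleftrightarrow> p \<in> verts G \<times> verts H \<and> q \<in> verts G \<times> verts H \<and>
   ((fst p = fst q \<and> adj H (snd p) (snd q)) \<or> adj G (fst p) (fst q))"
  by (cases p; cases q) (simp add: lex_prod_def)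

lemma phiOf_eq: "P \<in> partsOf f \<Longrightarrow> w \<in> P \<Longrightarrow> phiOf f P = fst (f w)"
proof -
  assume P: "P \<in> partsOf f" and w: "w \<in> P"
  then obtain u where "P = compo f u" unfolding partsOf_def by blast
  moreover have "(SOME v. v \<in> P) \<in> P" using w by (meson someI)
  ultimately show ?thesis using w P unfolding phiOf_def compo_def by (metis EE_fst mem_Collect_eq)
qed

lemma partsOf_sub: "P \<in> partsOf f \<Longrightarrow> P \<subseteq> verts F"
  using partsOf_partition[of f] partition_onD1 by blast

lemma Psi_in:
  assumes f: "f \<in> homs F (lex_prod G H)"
  shows "Psi f \<in> DD"
proof -
  have fv: "x \<in> verts F \<Longrightarrow> f x \<in> verts G \<times> verts H" for x
    using f by (auto simp: homs_def lex_prod_def)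
  have fa: "adj F x y \<Longrightarrow> adj (lex_prod G H) (f x) (f y)" for x y
    using f by (auto simp: homs_def)
  have 1: "partsOf f \<in> Parts" unfolding Parts_def
    using partsOf_partition partsOf_connected by blast
  have 2: "phiOf f \<in> homs (quotient_graph F (partsOf f)) G"
    unfolding homs_def
  proof (intro CollectI conjI allI impI)
    show "phiOf f \<in> verts (quotient_graph F (partsOf f)) \<rightarrow>\<^sub>E verts G"
    proof (rule PiE_I)
      fix P assume "P \<in> verts (quotient_graph F (partsOf f))"
      then have P: "P \<in> partsOf f" by (simp add: quotient_graph_def)
      then obtain w where "w \<in> P" using partsOf_partition[of f] partition_onD3 by fastforce
      then show "phiOf f P \<in> verts G" using phiOf_eq[OF P] fv partsOf_sub[OF P] by force
    next
      fix P assume "P \<notin> verts (quotient_graph F (partsOf f))"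
      then show "phiOf f P = undefined" by (simp add: quotient_graph_def phiOf_def)
    qed
  next
    fix P Q assume "adj (quotient_graph F (partsOf f)) P Q"
    then obtain p q where pq: "P \<in> partsOf f" "Q \<in> partsOf f" "P \<noteq> Q" "p \<in> P" "q \<in> Q" "adj F p q"
      by (auto simp: quotient_graph_def)
    have "fst (f p) \<noteq> fst (f q)"
    proof
      assume "fst (f p) = fst (f q)"
      then have "EE f p q" using pq by (simp add: EE_def)
      then have "q \<in> compo f p" by (simp add: compo_def)
      moreover have "p \<in> verts F" "q \<in> verts F" using pq adjF by auto
      ultimately have "part (partsOf f) q = part (partsOf f) p" using part_partsOf compo_eq by metis
      then show False using pq part_unique[OF partsOf_partition] by metis
    qed
    then have "adj G (fst (f p)) (fst (f q))" using fa[OF pq(6)] adj_lex by blast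
    then show "adj G (phiOf f P) (phiOf f Q)" using phiOf_eq pq by metis
  qed
  have 3: "psiOf f \<in> homs (coprod (partsOf f) (induced F)) H"
    unfolding homs_def
  proof (intro CollectI conjI allI impI)
    show "psiOf f \<in> verts (coprod (partsOf f) (induced F)) \<rightarrow>\<^sub>E verts H"
      using fv by (auto simp: coprod_def induced_def psiOf_def PiE_def extensional_def mem_Times_iff)
  next
    fix x y assume a: "adj (coprod (partsOf f) (induced F)) x y"
    obtain P v Q w where xy: "x = (P, v)" "y = (Q, w)" by (cases x; cases y)
    then have h: "P \<in> partsOf f" "Q = P" "adj F v w" "v \<in> P" "w \<in> P"
      using a by (auto simp: coprod_def induced_def)
    have vw: "v \<in> verts F" "w \<in> verts F" using h adjF by auto
    have "fst (f v) = fst (f w)" using phiOf_eq h by metis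
    then have "adj H (snd (f v)) (snd (f w))" using fa[OF h(3)] adj_lex adjG by metis
    then show "adj H (psiOf f x) (psiOf f y)" using xy h vw by (simp add: psiOf_def)
  qed
  show ?thesis using 1 2 3 by (simp add: DD_def Psi_def)
qed

lemma Phi_Psi:
  assumes f: "f \<in> homs F (lex_prod G H)"
  shows "Phi (Psi f) = f"
proof
  fix v
  show "Phi (Psi f) v = f v"
  proof (cases "v \<in> verts F")
    case True
    have "compo f v \<in> partsOf f" using True by (simp add: partsOf_def)
    then show ?thesis using True phiOf_eq[of "compo f v" f v] compo_self
      by (simp add: Phi_def Psi_def part_partsOf psiOf_def)
  next
    case False
    then show ?thesis using f by (simp add: Phi_def homs_def PiE_def extensional_def)
  qed
qed


lemma Phi_props:
  assumes x: "(\<R>, \<phi>, \<psi>) \<in> DD"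
  shows "Phi (\<R>, \<phi>, \<psi>) \<in> homs F (lex_prod G H)" and "Psi (Phi (\<R>, \<phi>, \<psi>)) = (\<R>, \<phi>, \<psi>)"
proof -
  let ?f = "Phi (\<R>, \<phi>, \<psi>)"
  have R: "partition_on (verts F) \<R>" and con: "\<And>R. R \<in> \<R> \<Longrightarrow> connected_graph (induced F R)"
    using x by (auto simp: DD_def Parts_def)
  have phi: "\<phi> \<in> homs (quotient_graph F \<R>) G" and psi: "\<psi> \<in> homs (coprod \<R> (induced F)) H"
    using x by (auto simp: DD_def)
  have phiv: "P \<in> \<R> \<Longrightarrow> \<phi> P \<in> verts G" for P using phi by (auto simp: homs_def quotient_graph_def)
  have phia: "P \<in> \<R> \<Longrightarrow> Q \<in> \<R> \<Longrightarrow> P \<noteq> Q \<Longrightarrow> p \<in> P \<Longrightarrow> q \<in> Q \<Longrightarrow> adj F p q \<Longrightarrow> adj G (\<phi> P) (\<phi> Q)"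
    for P Q p q using phi unfolding homs_def quotient_graph_def by (simp, blast)
  have psiv: "P \<in> \<R> \<Longrightarrow> v \<in> P \<Longrightarrow> v \<in> verts F \<Longrightarrow> \<psi> (P, v) \<in> verts H" for P v
    using psi by (auto simp: homs_def coprod_def induced_def)
  have psia: "P \<in> \<R> \<Longrightarrow> v \<in> P \<Longrightarrow> w \<in> P \<Longrightarrow> adj F v w \<Longrightarrow> adj H (\<psi> (P, v)) (\<psi> (P, w))"
    for P v w using psi unfolding homs_def coprod_def induced_def by auto
  have fv: "v \<in> verts F \<Longrightarrow> ?f v = (\<phi> (part \<R> v), \<psi> (part \<R> v, v))" for v
    by (simp add: Phi_def)
  have pin: "v \<in> verts F \<Longrightarrow> part \<R> v \<in> \<R> \<and> v \<in> part \<R> v" for v using part_in[OF R] by blast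
  show "?f \<in> homs F (lex_prod G H)"
    unfolding homs_def
  proof (intro CollectI conjI allI impI)
    show "?f \<in> verts F \<rightarrow>\<^sub>E verts (lex_prod G H)"
      using fv pin phiv psiv by (auto simp: lex_prod_def PiE_def extensional_def Phi_def)
  next
    fix u v assume a: "adj F u v"
    then have uv: "u \<in> verts F" "v \<in> verts F" using adjF by auto
    have inV: "?f u \<in> verts G \<times> verts H" "?f v \<in> verts G \<times> verts H"
      using uv fv pin phiv psiv by auto
    show "adj (lex_prod G H) (?f u) (?f v)"
    proof (cases "part \<R> u = part \<R> v")
      case True
      then have "adj H (\<psi> (part \<R> u, u)) (\<psi> (part \<R> v, v))" using psia pin uv a by metis
      then show ?thesis using inV fv uv True adj_lex by simp
    next
      case False
      then have "adj G (\<phi> (part \<R> u)) (\<phi> (part \<R> v))" using phia pin uv a by metis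
      then show ?thesis using inV fv uv adj_lex by simp
    qed
  qed
  have key: "compo ?f v = part \<R> v" if v: "v \<in> verts F" for v
  proof
    show "compo ?f v \<subseteq> part \<R> v"
    proof
      fix w assume "w \<in> compo ?f v"
      then have "(EE ?f)\<^sup>*\<^sup>* v w" by (simp add: compo_def)
      then show "w \<in> part \<R> v"
      proof (induction rule: rtranclp_induct)
        case base then show ?case using pin v by blast
      next
        case (step y z)
        have yz: "adj F y z" "fst (?f y) = fst (?f z)" using step(2) by (auto simp: EE_def)
        then have yzv: "y \<in> verts F" "z \<in> verts F" using adjF by auto
        have "part \<R> y = part \<R> z"
        proof (rule ccontr)
          assume "part \<R> y \<noteq> part \<R> z"
          then have "adj G (\<phi> (part \<R> y)) (\<phi> (part \<R> z))" using phia pin yzv yz by metis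
          then show False using yz fv yzv adjG by simp
        qed
        moreover have "part \<R> y = part \<R> v" using step(3) pin v part_unique[OF R] by metis
        ultimately show ?case using pin yzv by metis
      qed
    qed
  next
    let ?P = "part \<R> v"
    have P: "?P \<in> \<R>" "v \<in> ?P" using pin v by auto
    have Psub: "?P \<subseteq> verts F" using P R partition_onD1 by blast
    show "part \<R> v \<subseteq> compo ?f v"
    proof
      fix w assume w: "w \<in> ?P"
      have "(adj (induced F ?P))\<^sup>*\<^sup>* v w"
        using con[OF P(1)] P w Psub unfolding connected_graph_def induced_def by auto
      then have "(EE ?f)\<^sup>*\<^sup>* v w"
      proof (induction rule: rtranclp_induct)
        case base then show ?case by simp
      next
        case (step y z)
        have yz: "adj F y z" "y \<in> ?P" "z \<in> ?P" using step(2) by (auto simp: induced_def)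
        then have "part \<R> y = ?P" "part \<R> z = ?P" using part_unique[OF R P(1)] by auto
        then have "EE ?f y z" using yz adjF fv by (simp add: EE_def)
        then show ?case using step(3) by (simp add: rtranclp.rtrancl_into_rtrancl)
      qed
      then show "w \<in> compo ?f v" by (simp add: compo_def)
    qed
  qed
  have parts: "partsOf ?f = \<R>"
  proof
    show "partsOf ?f \<subseteq> \<R>" using key pin by (auto simp: partsOf_def)
    show "\<R> \<subseteq> partsOf ?f"
    proof
      fix P assume P: "P \<in> \<R>"
      then obtain v where v: "v \<in> P" using R partition_onD3 by fastforce
      then have "v \<in> verts F" using P R partition_onD1 by blast
      then show "P \<in> partsOf ?f" using key part_unique[OF R P v] unfolding partsOf_def by force
    qed
  qed
  have "phiOf ?f = \<phi>"
  proof
    fix P show "phiOf ?f P = \<phi> P"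
    proof (cases "P \<in> \<R>")
      case True
      then obtain v where v: "v \<in> P" using R partition_onD3 by fastforce
      then have "v \<in> verts F" using True R partition_onD1 by blast
      then show ?thesis using phiOf_eq[of P ?f v] parts True v fv part_unique[OF R True v] by simp
    next
      case False
      then show ?thesis using parts phi by (simp add: phiOf_def homs_def quotient_graph_def PiE_def extensional_def)
    qed
  qed
  moreover have "psiOf ?f = \<psi>"
  proof
    fix y :: "'a set \<times> 'a"
    obtain P v where y: "y = (P, v)" by (cases y)
    show "psiOf ?f y = \<psi> y"
    proof (cases "P \<in> \<R> \<and> v \<in> P \<and> v \<in> verts F")
      case True
      then have "part \<R> v = P" using part_unique[OF R] by blast
      then show ?thesis using True y parts fv by (simp add: psiOf_def)
    next
      case False
      have "y \<notin> verts (coprod \<R> (induced F))" using False y by (auto simp: coprod_def induced_def)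
      then have "\<psi> y = undefined" using psi y by (auto simp: homs_def PiE_def extensional_def)
      then show ?thesis using False y parts by (auto simp: psiOf_def)
    qed
  qed
  ultimately show "Psi ?f = (\<R>, \<phi>, \<psi>)" using parts by (simp add: Psi_def)
qed


lemma bij: "bij_betw Phi DD (homs F (lex_prod G H))"
proof (rule bij_betw_byWitness[where f' = Psi])
  show "\<forall>a\<in>DD. Psi (Phi a) = a" using Phi_props(2) by (metis prod_cases3)
  show "\<forall>a'\<in>homs F (lex_prod G H). Phi (Psi a') = a'" using Phi_Psi by blast
  show "Phi ` DD \<subseteq> homs F (lex_prod G H)" using Phi_props(1) by (metis image_subsetI prod_cases3)
  show "Psi ` homs F (lex_prod G H) \<subseteq> DD" using Psi_in by blast
qed

lemma finF: "finite (verts F)" and finG: "finite (verts G)" and finH: "finite (verts H)"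
  using sF sG sH by (auto simp: simple_graph_def)

lemma counting:
  "hom F (lex_prod G H) = (\<Sum>\<R>\<in>Parts. hom (quotient_graph F \<R>) G * hom (coprod \<R> (induced F)) H)"
proof -
  have finP: "finite Parts"
  proof (rule finite_subset)
    show "Parts \<subseteq> Pow (Pow (verts F))" unfolding Parts_def using partition_onD1 by fastforce
  qed (simp add: finF)
  have finB: "finite (homs (quotient_graph F \<R>) G \<times> homs (coprod \<R> (induced F)) H)"
    if "\<R> \<in> Parts" for \<R>
  proof -
    have R: "finite \<R>" using that finF unfolding Parts_def
      by (metis (no_types, lifting) finite_elements mem_Collect_eq)
    have "finite (verts (coprod \<R> (induced F)))"
    proof (rule finite_subset)
      show "verts (coprod \<R> (induced F)) \<subseteq> \<R> \<times> verts F" by (auto simp: coprod_def induced_def)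
    qed (simp add: R finF)
    then have "finite (homs (coprod \<R> (induced F)) H)"
      unfolding homs_def using finH by (simp add: finite_PiE)
    moreover have "finite (homs (quotient_graph F \<R>) G)"
      unfolding homs_def using finG R by (simp add: finite_PiE quotient_graph_def)
    ultimately show ?thesis by simp
  qed
  have "hom F (lex_prod G H) = card DD" unfolding hom_def using bij bij_betw_same_card by metis
  also have "\<dots> = (\<Sum>\<R>\<in>Parts. card (homs (quotient_graph F \<R>) G \<times> homs (coprod \<R> (induced F)) H))"
    unfolding DD_def using finP finB by (simp add: card_SigmaI)
  also have "\<dots> = (\<Sum>\<R>\<in>Parts. hom (quotient_graph F \<R>) G * hom (coprod \<R> (induced F)) H)"
    by (simp add: hom_def card_cartesian_product)
  finally show ?thesis .
qed

end

theorem theorem16: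
  fixes F :: "'a sgraph" and G :: "'b sgraph" and H :: "'c sgraph"
  assumes "simple_graph F" and "simple_graph G" and "simple_graph H"
  shows "hom F (lex_prod G H) =
    (\<Sum>\<R> \<in> {\<R>. partition_on (verts F) \<R> \<and> (\<forall>R\<in>\<R>. connected_graph (induced F R))}.
        hom (quotient_graph F \<R>) G * hom (coprod \<R> (\<lambda>R. induced F R)) H)"
  using counting[OF assms] unfolding Parts_def[OF assms] by simp

end
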